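(* Let $X$ be any topological space (no separation axioms assumed). If $X$ is an Alster space, then $X$ is totally Lindelöf.
   Context: A filter base on a set $X$ is a nonempty family $\mathcal{F}\subseteq\mathcal{P}(X)$ such that $\emptyset\notin\mathcal{F}$ and $F_0\cap F_1\in\mathcal{F}$ for all $F_0,F_1\in\mathcal{F}$. A filter base $\mathcal{F}$ is stable under countable intersections if for every countable $S\subseteq\mathcal{F}$ there is $H\in\mathcal{F}$ with $H\subseteq\bigcap S$. For $\mathcal{F}\subseteq\mathcal{P}(X)$, $ad(\mathcal{F})=\bigcap\{\overline{F}: F\in\mathcal{F}\}$. A filter base $\mathcal{F}$ on $X$ is total if every filter base $\mathcal{H}\supseteq\mathcal{F}$ on $X$ satisfies $ad(\mathcal{H})\neq\emptyset$. $X$ is totally Lindelöf if every filter base on $X$ stable under countable intersections is contained in some total filter base on $X$ stable under countable intersections. A $G_\delta$ set is a countable intersection of open sets. An Alster covering of $X$ is a family $\mathcal{G}$ of $G_\delta$ subsets of $X$ such that every compact $K\subseteq X$ is contained in some member of $\mathcal{G}$; $X$ is an Alster space if every Alster covering of $X$ has a countable subfamily covering $X$. *)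

theory Defs
  imports "HOL-Analysis.Analysis"
begin

definition filter_base :: "'a topology \<Rightarrow> 'a set set \<Rightarrow> bool" where
  "filter_base X \<F> \<longleftrightarrow>
     \<F> \<noteq> {} \<and> \<F> \<subseteq> Pow (topspace X) \<and> {} \<notin> \<F> \<and>
     (\<forall>F0\<in>\<F>. \<forall>F1\<in>\<F>. F0 \<inter> F1 \<in> \<F>)"

definition stable_countable_inter :: "'a set set \<Rightarrow> bool" where
  "stable_countable_inter \<F> \<longleftrightarrow>
     (\<forall>S. S \<subseteq> \<F> \<and> countable S \<longrightarrow> (\<exists>H\<in>\<F>. H \<subseteq> \<Inter>S))"

definition ad :: "'a topology \<Rightarrow> 'a set set \<Rightarrow> 'a set" where
  "ad X \<F> = topspace X \<inter> \<Inter>{X closure_of F | F. F \<in> \<F>}"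

definition total_filter_base :: "'a topology \<Rightarrow> 'a set set \<Rightarrow> bool" where
  "total_filter_base X \<F> \<longleftrightarrow>
     filter_base X \<F> \<and> (\<forall>\<H>. filter_base X \<H> \<and> \<F> \<subseteq> \<H> \<longrightarrow> ad X \<H> \<noteq> {})"

definition totally_lindelof :: "'a topology \<Rightarrow> bool" where
  "totally_lindelof X \<longleftrightarrow>
     (\<forall>\<F>. filter_base X \<F> \<and> stable_countable_inter \<F> \<longrightarrow>
        (\<exists>\<G>. \<F> \<subseteq> \<G> \<and> total_filter_base X \<G> \<and> stable_countable_inter \<G>))"

definition alster_covering :: "'a topology \<Rightarrow> 'a set set \<Rightarrow> bool" where
  "alster_covering X \<G> \<longleftrightarrow>
     (\<forall>G\<in>\<G>. gdelta_in X G) \<and>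
     (\<forall>K. compactin X K \<longrightarrow> (\<exists>G\<in>\<G>. K \<subseteq> G))"

definition alster_space :: "'a topology \<Rightarrow> bool" where
  "alster_space X \<longleftrightarrow>
     (\<forall>\<G>. alster_covering X \<G> \<longrightarrow>
        (\<exists>\<C>. \<C> \<subseteq> \<G> \<and> countable \<C> \<and> topspace X \<subseteq> \<Union>\<C>))"

end

theory Submission
  imports Defs
begin

lemma fb_finite_inter:
  assumes fb: "filter_base X \<H>" and T: "finite T" "T \<subseteq> \<H>" and A: "A \<in> \<H>"
  shows "A \<inter> \<Inter>T \<in> \<H>"
  using T
proof (induction T rule: finite_induct)
  case empty then show ?case using A by simp
next
  case (insert t T)
  then have "A \<inter> \<Inter>T \<in> \<H>" "t \<in> \<H>" by auto
  then have "(A \<inter> \<Inter>T) \<inter> t \<in> \<H>" using fb unfolding filter_base_def by blast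
  moreover have "(A \<inter> \<Inter>T) \<inter> t = A \<inter> \<Inter>(insert t T)" by auto
  ultimately show ?case by simp
qed

lemma key_compact:
  assumes al: "alster_space X" and fb: "filter_base X \<F>" and st: "stable_countable_inter \<F>"
  shows "\<exists>K. compactin X K \<and> (\<forall>U F. gdelta_in X U \<longrightarrow> K \<subseteq> U \<longrightarrow> F \<in> \<F> \<longrightarrow> F \<inter> U \<noteq> {})"
proof (rule ccontr)
  assume neg: "\<not> ?thesis"
  have H: "\<exists>U. gdelta_in X U \<and> K \<subseteq> U \<and> (\<exists>F\<in>\<F>. F \<inter> U = {})" if K: "compactin X K" for K
  proof -
    have "\<not> (\<forall>U F. gdelta_in X U \<longrightarrow> K \<subseteq> U \<longrightarrow> F \<in> \<F> \<longrightarrow> F \<inter> U \<noteq> {})"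
      using K neg by (intro notI) (erule notE, rule exI[of _ K], simp)
    then show ?thesis unfolding Bex_def by simp
  qed
  define \<G> where "\<G> = {U. gdelta_in X U \<and> (\<exists>F\<in>\<F>. F \<inter> U = {})}"
  have cov: "alster_covering X \<G>"
    unfolding alster_covering_def
  proof (intro conjI allI impI ballI)
    fix G assume "G \<in> \<G>" then show "gdelta_in X G" unfolding \<G>_def mem_Collect_eq by (elim conjE)
  next
    fix K assume "compactin X K"
    from H[OF this] obtain U where U: "gdelta_in X U \<and> K \<subseteq> U \<and> (\<exists>F\<in>\<F>. F \<inter> U = {})" ..
    then have "U \<in> \<G>" unfolding \<G>_def mem_Collect_eq by (elim conjE, intro conjI)
    moreover have "K \<subseteq> U" using U by (elim conjE)
    ultimately show "\<exists>G\<in>\<G>. K \<subseteq> G" by (rule bexI[rotated])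
  qed
  obtain \<C> where C: "\<C> \<subseteq> \<G>" "countable \<C>" "topspace X \<subseteq> \<Union>\<C>"
    using al[unfolded alster_space_def, rule_format, OF cov] by (elim exE conjE)
  define f where "f U = (SOME F. F \<in> \<F> \<and> F \<inter> U = {})" for U
  have f: "f U \<in> \<F> \<and> f U \<inter> U = {}" if "U \<in> \<C>" for U
  proof -
    have "U \<in> \<G>" using C(1) that by (rule subsetD)
    then have "\<exists>F\<in>\<F>. F \<inter> U = {}" unfolding \<G>_def mem_Collect_eq by (elim conjE)
    then have "\<exists>F. F \<in> \<F> \<and> F \<inter> U = {}" by (simp only: Bex_def)
    then show ?thesis unfolding f_def by (rule someI_ex)
  qed
  have "f ` \<C> \<subseteq> \<F>" using f by blast
  moreover have "countable (f ` \<C>)" using C(2) by simp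
  ultimately obtain H where H: "H \<in> \<F>" "H \<subseteq> \<Inter>(f ` \<C>)"
    using st unfolding stable_countable_inter_def by blast
  then have "H \<noteq> {}" "H \<subseteq> topspace X" using fb unfolding filter_base_def by auto
  then obtain x where x: "x \<in> H" "x \<in> topspace X" by blast
  then obtain U where U: "U \<in> \<C>" "x \<in> U" using C(3) by blast
  then have "x \<in> f U" using H x by blast
  then show False using f[OF U(1)] U(2) by blast
qed
lemma G_intro: "F \<in> \<F> \<Longrightarrow> gdelta_in X U \<Longrightarrow> K \<subseteq> U \<Longrightarrow> F \<inter> U \<in> {F \<inter> U | F U. F \<in> \<F> \<and> gdelta_in X U \<and> K \<subseteq> U}"
  by blast

lemma G_elim: "G \<in> {F \<inter> U | F U. F \<in> \<F> \<and> gdelta_in X U \<and> K \<subseteq> U} \<Longrightarrow> (\<And>F U. G = F \<inter> U \<Longrightarrow> F \<in> \<F> \<Longrightarrow> gdelta_in X U \<Longrightarrow> K \<subseteq> U \<Longrightarrow> P) \<Longrightarrow> P"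
  by blast

theorem mainTheorem2:
  fixes X :: "'a topology"
  assumes "alster_space X"
  shows "totally_lindelof X"
  unfolding totally_lindelof_def
proof (intro allI impI)
  fix \<F> assume A: "filter_base X \<F> \<and> stable_countable_inter \<F>"
  have fb: "filter_base X \<F>" using A by (rule conjunct1)
  have st: "stable_countable_inter \<F>" using A by (rule conjunct2)
  from key_compact[OF assms fb st] obtain K where
    KK: "compactin X K \<and> (\<forall>U F. gdelta_in X U \<longrightarrow> K \<subseteq> U \<longrightarrow> F \<in> \<F> \<longrightarrow> F \<inter> U \<noteq> {})" ..
  have K: "compactin X K" using KK by (rule conjunct1)
  have meet: "F \<inter> U \<noteq> {}" if "gdelta_in X U" "K \<subseteq> U" "F \<in> \<F>" for U F
    using conjunct2[OF KK] that by simp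
  define \<G> where "\<G> = {F \<inter> U | F U. F \<in> \<F> \<and> gdelta_in X U \<and> K \<subseteq> U}"
  have Ksub: "K \<subseteq> topspace X" using K by (simp add: compactin_def)
  have F01: "\<F> \<noteq> {}" using fb by (simp add: filter_base_def)
  have F02: "\<F> \<subseteq> Pow (topspace X)" using fb by (simp add: filter_base_def)
  have F03: "F0 \<inter> F1 \<in> \<F>" if "F0 \<in> \<F>" "F1 \<in> \<F>" for F0 F1
    using fb that by (simp add: filter_base_def)
  have sub: "\<F> \<subseteq> \<G>"
  proof
    fix F assume F: "F \<in> \<F>"
    have "F \<inter> topspace X \<in> \<G>" unfolding \<G>_def
      by (rule G_intro[OF F]) (simp_all add: Ksub)
    moreover have "F \<inter> topspace X = F" using F02 F by auto
    ultimately show "F \<in> \<G>" by simp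
  qed
  have fbG: "filter_base X \<G>"
    unfolding filter_base_def
  proof (intro conjI ballI)
    show "\<G> \<noteq> {}" using sub F01 by auto
    show "\<G> \<subseteq> Pow (topspace X)"
    proof
      fix G assume "G \<in> \<G>"
      then show "G \<in> Pow (topspace X)" unfolding \<G>_def
        by (rule G_elim) (use F02 in auto)
    qed
    show "{} \<notin> \<G>"
    proof
      assume "{} \<in> \<G>"
      then show False unfolding \<G>_def
        by (rule G_elim) (metis meet)
    qed
    fix G0 G1 assume G0: "G0 \<in> \<G>" and G1: "G1 \<in> \<G>"
    from G0 show "G0 \<inter> G1 \<in> \<G>" unfolding \<G>_def
    proof (rule G_elim)
      fix F0' U0 assume a: "G0 = F0' \<inter> U0" "F0' \<in> \<F>" "gdelta_in X U0" "K \<subseteq> U0"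
      from G1 show "G0 \<inter> G1 \<in> {F \<inter> U | F U. F \<in> \<F> \<and> gdelta_in X U \<and> K \<subseteq> U}" unfolding \<G>_def
      proof (rule G_elim)
        fix F1 U1 assume b: "G1 = F1 \<inter> U1" "F1 \<in> \<F>" "gdelta_in X U1" "K \<subseteq> U1"
        have "(F0' \<inter> F1) \<inter> (U0 \<inter> U1) \<in> {F \<inter> U | F U. F \<in> \<F> \<and> gdelta_in X U \<and> K \<subseteq> U}"
          by (rule G_intro) (use a b F03 gdelta_in_Int in auto)
        moreover have "(F0' \<inter> F1) \<inter> (U0 \<inter> U1) = G0 \<inter> G1" using a b by auto
        ultimately show "G0 \<inter> G1 \<in> {F \<inter> U | F U. F \<in> \<F> \<and> gdelta_in X U \<and> K \<subseteq> U}" by simp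
      qed
    qed
  qed
  have stG: "stable_countable_inter \<G>"
    unfolding stable_countable_inter_def
  proof (intro allI impI)
    fix S assume S: "S \<subseteq> \<G> \<and> countable S"
    have ex: "\<exists>p. fst p \<in> \<F> \<and> gdelta_in X (snd p) \<and> K \<subseteq> snd p \<and> s = fst p \<inter> snd p"
      if "s \<in> S" for s
    proof -
      from that S have "s \<in> \<G>" by auto
      then show ?thesis unfolding \<G>_def
        by (rule G_elim) (rule_tac x="(F,U)" in exI, simp)
    qed
    define p where "p s = (SOME p. fst p \<in> \<F> \<and> gdelta_in X (snd p) \<and> K \<subseteq> snd p \<and> s = fst p \<inter> snd p)" for s
    have p: "fst (p s) \<in> \<F> \<and> gdelta_in X (snd (p s)) \<and> K \<subseteq> snd (p s) \<and> s = fst (p s) \<inter> snd (p s)"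
      if "s \<in> S" for s
      using someI_ex[OF ex[OF that]] unfolding p_def .
    have "(\<lambda>s. fst (p s)) ` S \<subseteq> \<F>" using p by auto
    moreover have "countable ((\<lambda>s. fst (p s)) ` S)" using S by auto
    ultimately obtain H where H: "H \<in> \<F>" "H \<subseteq> \<Inter>((\<lambda>s. fst (p s)) ` S)"
      using st unfolding stable_countable_inter_def by blast
    define U where "U = \<Inter>(insert (topspace X) ((\<lambda>s. snd (p s)) ` S))"
    have "gdelta_in X U" unfolding U_def
      by (rule gdelta_in_Inter) (use S p in auto)
    moreover have "K \<subseteq> U" unfolding U_def using Ksub p by auto
    ultimately have HU: "H \<inter> U \<in> \<G>" unfolding \<G>_def by (rule G_intro[OF H(1)])
    have "H \<inter> U \<subseteq> \<Inter>S"
    proof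
      fix x assume x: "x \<in> H \<inter> U"
      show "x \<in> \<Inter>S"
      proof
        fix s assume s: "s \<in> S"
        have "x \<in> fst (p s)" using x H(2) s by auto
        moreover have "x \<in> snd (p s)" using x s unfolding U_def by auto
        ultimately show "x \<in> s" using p[OF s] by auto
      qed
    qed
    with HU show "\<exists>H\<in>\<G>. H \<subseteq> \<Inter>S" by (rule bexI[rotated])
  qed
  have total: "total_filter_base X \<G>"
    unfolding total_filter_base_def
  proof (intro conjI allI impI)
    show "filter_base X \<G>" by (rule fbG)
    fix \<H> assume HH: "filter_base X \<H> \<and> \<G> \<subseteq> \<H>"
    have fbH: "filter_base X \<H>" using HH by (rule conjunct1)
    have GH: "\<G> \<subseteq> \<H>" using HH by (rule conjunct2)
    show "ad X \<H> \<noteq> {}"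
    proof
      assume ad0: "ad X \<H> = {}"
      have ex: "\<exists>V H. openin X V \<and> x \<in> V \<and> H \<in> \<H> \<and> V \<inter> H = {}" if "x \<in> K" for x
      proof -
        have xt: "x \<in> topspace X" using that Ksub by auto
        have "x \<notin> \<Inter>{X closure_of F | F. F \<in> \<H>}"
        proof
          assume "x \<in> \<Inter>{X closure_of F | F. F \<in> \<H>}"
          with xt have "x \<in> topspace X \<inter> \<Inter>{X closure_of F | F. F \<in> \<H>}" by (rule IntI)
          then show False using ad0 unfolding ad_def by simp
        qed
        then obtain H where H: "H \<in> \<H>" "x \<notin> X closure_of H" by auto
        then obtain V where "x \<in> V" "openin X V" "\<forall>y. y \<in> H \<longrightarrow> y \<notin> V"
          using xt unfolding in_closure_of by auto
        then have "openin X V \<and> x \<in> V \<and> H \<in> \<H> \<and> V \<inter> H = {}" using H by auto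
        then show ?thesis by (intro exI)
      qed
      define V where "V x = (SOME V. \<exists>H. openin X V \<and> x \<in> V \<and> H \<in> \<H> \<and> V \<inter> H = {})" for x
      have V: "\<exists>H. openin X (V x) \<and> x \<in> V x \<and> H \<in> \<H> \<and> V x \<inter> H = {}" if "x \<in> K" for x
        unfolding V_def using ex[OF that] by (rule someI_ex)
      define Hx where "Hx x = (SOME H. openin X (V x) \<and> x \<in> V x \<and> H \<in> \<H> \<and> V x \<inter> H = {})" for x
      have VH: "openin X (V x) \<and> x \<in> V x \<and> Hx x \<in> \<H> \<and> V x \<inter> Hx x = {}" if "x \<in> K" for x
        unfolding Hx_def using V[OF that] by (rule someI_ex)
      have "\<forall>U\<in>V ` K. openin X U" using VH by auto
      moreover have "K \<subseteq> \<Union>(V ` K)" using VH by auto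
      ultimately obtain \<T> where T: "finite \<T>" "\<T> \<subseteq> V ` K" "K \<subseteq> \<Union>\<T>"
        using K unfolding compactin_def by meson
      then obtain P where P: "finite P" "P \<subseteq> K" "\<T> = V ` P"
        by (meson finite_subset_image)
      have opT: "openin X (\<Union>\<T>)" using T(2) VH by auto
      obtain F1 where F1: "F1 \<in> \<F>" using F01 by auto
      have "F1 \<inter> \<Union>\<T> \<in> \<G>" unfolding \<G>_def
        by (rule G_intro[OF F1]) (use opT T(3) open_imp_gdelta_in in auto)
      then have A: "F1 \<inter> \<Union>\<T> \<in> \<H>" using GH by auto
      have "F1 \<inter> \<Union>\<T> \<inter> \<Inter>(Hx ` P) \<in> \<H>"
        by (rule fb_finite_inter[OF fbH]) (use A P VH in auto)
      moreover have "F1 \<inter> \<Union>\<T> \<inter> \<Inter>(Hx ` P) = {}"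
      proof -
        have "y \<notin> F1 \<inter> \<Union>\<T> \<inter> \<Inter>(Hx ` P)" for y
        proof
          assume y: "y \<in> F1 \<inter> \<Union>\<T> \<inter> \<Inter>(Hx ` P)"
          then obtain z where z: "z \<in> P" "y \<in> V z" using P(3) by auto
          then have "y \<in> Hx z" using y by auto
          moreover have "V z \<inter> Hx z = {}" using VH z(1) P(2) by auto
          ultimately show False using z(2) by auto
        qed
        then show ?thesis by auto
      qed
      moreover have "{} \<notin> \<H>" using fbH by (simp add: filter_base_def)
      ultimately show False by simp
    qed
  qed
  show "\<exists>\<G>. \<F> \<subseteq> \<G> \<and> total_filter_base X \<G> \<and> stable_countable_inter \<G>"
    using sub total stG by auto
qed

end
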